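(* In the setting described in the context, let $R=I_m-H\bar H$. Then the induced norm $\|R\|=\sqrt{\lambda_{\max}(R^TR)}$ equals $1$.
   Context: Let $V=\{1,\ldots,N\}$, $N\ge 2$, and let $G_I=(V,E_I)$ be a connected undirected graph which is not complete, with adjacency matrix $A$; let $B=A+I_N$. For $i\in V$ let $N_I(i)$ be the set of neighbors of $i$ in $G_I$, $\tilde N_I(i)=N_I(i)\cup\{i\}$, $m_i=\deg_{G_I}(i)+1$, $m=\sum_{i=1}^N m_i$. For $i,j\in V$ set $s_{ij}=\sum_{l=1}^{j}B(i,l)+\sum_{r=1}^{i-1}m_r$ (the last sum is $0$ for $i=1$). Let $e_1,\ldots,e_m$ be the standard basis of $\mathbb{R}^m$ and define $E_j^i=e_{s_{ij}}$ if $j\in\tilde N_I(i)$ and $E_j^i=\mathbf{0}_m$ otherwise. Let $H=\big[\sum_{i=1}^N E_1^i,\ldots,\sum_{i=1}^N E_N^i\big]\in\mathbb{R}^{m\times N}$ and $\bar H=\mathrm{diag}(1/m_1,\ldots,1/m_N)H^T\in\mathbb{R}^{N\times m}$. *)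

theory Defs
  imports "Jordan_Normal_Form.Char_Poly"
begin

(* Indices of
   vertices and of R^m are 1-based as in the paper; JNF matrices are 0-based,
   so entry (k,j) of a JNF matrix corresponds to paper index (k+1, j+1). *)

definition Vset :: "nat \<Rightarrow> nat set" where
  "Vset N = {1..N}"

definition adjA :: "(nat \<Rightarrow> nat \<Rightarrow> bool) \<Rightarrow> nat \<Rightarrow> nat \<Rightarrow> nat" where
  "adjA adj i l = (if adj i l then 1 else 0)"

definition Bmat :: "(nat \<Rightarrow> nat \<Rightarrow> bool) \<Rightarrow> nat \<Rightarrow> nat \<Rightarrow> nat" where
  "Bmat adj i l = adjA adj i l + (if i = l then 1 else 0)"

definition nbr :: "nat \<Rightarrow> (nat \<Rightarrow> nat \<Rightarrow> bool) \<Rightarrow> nat \<Rightarrow> nat set" where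
  "nbr N adj i = {j \<in> Vset N. adj i j}"

definition nbr_cl :: "nat \<Rightarrow> (nat \<Rightarrow> nat \<Rightarrow> bool) \<Rightarrow> nat \<Rightarrow> nat set" where
  "nbr_cl N adj i = insert i (nbr N adj i)"

definition mdeg :: "nat \<Rightarrow> (nat \<Rightarrow> nat \<Rightarrow> bool) \<Rightarrow> nat \<Rightarrow> nat" where
  "mdeg N adj i = card (nbr N adj i) + 1"

definition mtot :: "nat \<Rightarrow> (nat \<Rightarrow> nat \<Rightarrow> bool) \<Rightarrow> nat" where
  "mtot N adj = (\<Sum>i = 1..N. mdeg N adj i)"

definition sidx :: "nat \<Rightarrow> (nat \<Rightarrow> nat \<Rightarrow> bool) \<Rightarrow> nat \<Rightarrow> nat \<Rightarrow> nat" where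
  "sidx N adj i j = (\<Sum>l = 1..j. Bmat adj i l) + (\<Sum>r = 1..i - 1. mdeg N adj r)"

definition Evec :: "nat \<Rightarrow> (nat \<Rightarrow> nat \<Rightarrow> bool) \<Rightarrow> nat \<Rightarrow> nat \<Rightarrow> real vec" where
  "Evec N adj i j = (if j \<in> nbr_cl N adj i
      then vec (mtot N adj) (\<lambda>k. if Suc k = sidx N adj i j then 1 else 0)
      else 0\<^sub>v (mtot N adj))"

definition Hmat :: "nat \<Rightarrow> (nat \<Rightarrow> nat \<Rightarrow> bool) \<Rightarrow> real mat" where
  "Hmat N adj = mat (mtot N adj) N
      (\<lambda>(k, j). (\<Sum>i = 1..N. Evec N adj i (Suc j) $ k))"

definition Hbar :: "nat \<Rightarrow> (nat \<Rightarrow> nat \<Rightarrow> bool) \<Rightarrow> real mat" where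
  "Hbar N adj = mat N N (\<lambda>(i, j). if i = j then 1 / real (mdeg N adj (Suc i)) else 0)
      * transpose_mat (Hmat N adj)"

definition Rmat :: "nat \<Rightarrow> (nat \<Rightarrow> nat \<Rightarrow> bool) \<Rightarrow> real mat" where
  "Rmat N adj = 1\<^sub>m (mtot N adj) - Hmat N adj * Hbar N adj"

definition lambda_max :: "real mat \<Rightarrow> real" where
  "lambda_max M = Max {l. eigenvalue M l}"

definition induced_norm :: "real mat \<Rightarrow> real" where
  "induced_norm R = sqrt (lambda_max (transpose_mat R * R))"

end

theory Submission
  imports Defs
begin

locale gctx =
  fixes N :: nat and adj :: "nat \<Rightarrow> nat \<Rightarrow> bool"
  assumes inV: "\<And>i j. adj i j \<Longrightarrow> i \<in> Vset N \<and> j \<in> Vset N"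
    and sym: "\<And>i j. adj i j \<Longrightarrow> adj j i"
    and irr: "\<And>i. \<not> adj i i"

context gctx
begin

lemma nbr_cl_V: "i \<in> Vset N \<Longrightarrow> j \<in> nbr_cl N adj i \<Longrightarrow> j \<in> Vset N"
  by (auto simp: nbr_cl_def nbr_def)

lemma nbr_fin: "finite (nbr N adj i)"
  by (auto simp: nbr_def Vset_def)

lemma rowsum: assumes "i \<in> Vset N" shows "(\<Sum>l = 1..N. Bmat adj i l) = mdeg N adj i"
proof -
  have "(\<Sum>l = 1..N. Bmat adj i l) = (\<Sum>l = 1..N. adjA adj i l) + (\<Sum>l = 1..N. (if i = l then 1 else 0))"
    by (simp add: Bmat_def sum.distrib)
  also have "(\<Sum>l = 1..N. (if i = l then 1 else 0)) = (1::nat)"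
    using assms by (simp add: Vset_def)
  also have "(\<Sum>l = 1..N. adjA adj i l) = card (nbr N adj i)"
    by (simp add: adjA_def nbr_def Vset_def sum.If_cases Int_def conj_commute)
  finally show ?thesis by (simp add: mdeg_def)
qed

lemma Bmat_self: "j \<in> nbr_cl N adj i \<Longrightarrow> Bmat adj i j = 1"
  by (auto simp: nbr_cl_def nbr_def Bmat_def adjA_def irr)

lemma ps_ge: assumes "i \<in> Vset N" "j \<in> nbr_cl N adj i"
  shows "1 \<le> (\<Sum>l = 1..j. Bmat adj i l)"
proof -
  have j: "j \<in> Vset N" using nbr_cl_V assms by blast
  have "Bmat adj i j \<le> (\<Sum>l = 1..j. Bmat adj i l)"
    by (rule member_le_sum) (use j in \<open>auto simp: Vset_def\<close>)
  then show ?thesis using Bmat_self[OF assms(2)] by simp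
qed

lemma ps_le: assumes "i \<in> Vset N" "j \<in> nbr_cl N adj i"
  shows "(\<Sum>l = 1..j. Bmat adj i l) \<le> mdeg N adj i"
proof -
  have j: "j \<in> Vset N" using nbr_cl_V assms by blast
  have "(\<Sum>l = 1..j. Bmat adj i l) \<le> (\<Sum>l = 1..N. Bmat adj i l)"
    by (rule sum_mono2) (use j in \<open>auto simp: Vset_def\<close>)
  then show ?thesis using rowsum[OF assms(1)] by simp
qed

lemma ps_mono: assumes "j \<in> nbr_cl N adj i" "j' \<in> nbr_cl N adj i" "j < j'"
  shows "(\<Sum>l = 1..j. Bmat adj i l) < (\<Sum>l = 1..j'. Bmat adj i l)"
proof -
  have "{1..j'} = {1..j} \<union> {Suc j..j'}" using assms(3) by auto
  then have "(\<Sum>l = 1..j'. Bmat adj i l) = (\<Sum>l = 1..j. Bmat adj i l) + (\<Sum>l = Suc j..j'. Bmat adj i l)"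
    by (simp add: sum.union_disjoint)
  moreover have "Bmat adj i j' \<le> (\<Sum>l = Suc j..j'. Bmat adj i l)"
    by (rule member_le_sum) (use assms(3) in auto)
  ultimately show ?thesis using Bmat_self[OF assms(2)] by simp
qed

definition off :: "nat \<Rightarrow> nat" where "off i = (\<Sum>r = 1..i - 1. mdeg N adj r)"

lemma off_step: "1 \<le> i \<Longrightarrow> off i + mdeg N adj i = off (Suc i)"
  unfolding off_def by (cases i) (auto)

lemma off_mono: "i \<le> i' \<Longrightarrow> off i \<le> off i'"
  unfolding off_def by (rule sum_mono2) auto

lemma off_N: "1 \<le> N \<Longrightarrow> off (Suc N) = mtot N adj"
  unfolding off_def mtot_def by simp

lemma sidx_off: "sidx N adj i j = (\<Sum>l = 1..j. Bmat adj i l) + off i"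
  by (simp add: sidx_def off_def)

lemma sidx_range: assumes "i \<in> Vset N" "j \<in> nbr_cl N adj i"
  shows "off i < sidx N adj i j" "sidx N adj i j \<le> off (Suc i)"
  using ps_ge[OF assms] ps_le[OF assms] off_step[of i] assms(1)
  by (auto simp: sidx_off Vset_def)

lemma sidx_le_m: assumes "i \<in> Vset N" "j \<in> nbr_cl N adj i"
  shows "1 \<le> sidx N adj i j" "sidx N adj i j \<le> mtot N adj"
proof -
  show "1 \<le> sidx N adj i j" using sidx_range(1)[OF assms] by simp
  have "off (Suc i) \<le> off (Suc N)" using assms(1) by (intro off_mono) (auto simp: Vset_def)
  then show "sidx N adj i j \<le> mtot N adj" using sidx_range(2)[OF assms] off_N assms(1)
    by (auto simp: Vset_def)
qed

lemma sidx_inj: assumes "i \<in> Vset N" "j \<in> nbr_cl N adj i" "i' \<in> Vset N" "j' \<in> nbr_cl N adj i'"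
  and eq: "sidx N adj i j = sidx N adj i' j'"
  shows "i = i' \<and> j = j'"
proof -
  have ii: "i = i'"
  proof (rule ccontr)
    assume "i \<noteq> i'"
    then consider "i < i'" | "i' < i" by linarith
    then show False
    proof cases
      case 1
      then have "off (Suc i) \<le> off i'" by (intro off_mono) auto
      then show False using sidx_range[OF assms(1,2)] sidx_range[OF assms(3,4)] eq by linarith
    next
      case 2
      then have "off (Suc i') \<le> off i" by (intro off_mono) auto
      then show False using sidx_range[OF assms(1,2)] sidx_range[OF assms(3,4)] eq by linarith
    qed
  qed
  moreover have "j = j'"
  proof (rule ccontr)
    assume "j \<noteq> j'"
    then consider "j < j'" | "j' < j" by linarith
    then show False
      using ps_mono[OF assms(2) assms(4)[folded ii]] ps_mono[OF assms(4)[folded ii] assms(2)] eq ii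
      by (cases, auto simp: sidx_off)
  qed
  ultimately show ?thesis by simp
qed


definition hit :: "nat \<Rightarrow> nat \<Rightarrow> bool" where
  "hit k j = (\<exists>i \<in> Vset N. Suc j \<in> nbr_cl N adj i \<and> Suc k = sidx N adj i (Suc j))"

lemma Hmat_carrier: "Hmat N adj \<in> carrier_mat (mtot N adj) N"
  by (simp add: Hmat_def)

lemma H_entry: assumes k: "k < mtot N adj" and j: "j < N"
  shows "Hmat N adj $$ (k,j) = (if hit k j then 1 else 0)"
proof -
  have "Hmat N adj $$ (k,j) = (\<Sum>i = 1..N. Evec N adj i (Suc j) $ k)"
    using k j by (simp add: Hmat_def)
  also have "\<dots> = (\<Sum>i \<in> Vset N. if Suc j \<in> nbr_cl N adj i \<and> Suc k = sidx N adj i (Suc j) then 1 else 0)"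
    using k by (intro sum.cong) (auto simp: Evec_def Vset_def)
  also have "\<dots> = (if hit k j then 1 else 0)"
  proof (cases "hit k j")
    case True
    then obtain i0 where i0: "i0 \<in> Vset N" "Suc j \<in> nbr_cl N adj i0" "Suc k = sidx N adj i0 (Suc j)"
      by (auto simp: hit_def)
    have "(\<Sum>i \<in> Vset N. if Suc j \<in> nbr_cl N adj i \<and> Suc k = sidx N adj i (Suc j) then 1 else 0)
        = (\<Sum>i \<in> Vset N. if i = i0 then 1 else (0::real))"
      using sidx_inj[of _ "Suc j" i0 "Suc j"] i0 by (intro sum.cong refl) auto
    also have "\<dots> = 1" using i0(1) by (simp add: Vset_def)
    finally show ?thesis using True by simp
  next
    case False
    then show ?thesis by (auto simp: hit_def intro!: sum.neutral)
  qed
  finally show ?thesis .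
qed

lemma cl_set: assumes "a \<in> Vset N"
  shows "{i \<in> Vset N. a \<in> nbr_cl N adj i} = nbr_cl N adj a"
  using assms sym inV by (auto simp: nbr_cl_def nbr_def)

lemma card_cl: "card (nbr_cl N adj a) = mdeg N adj a"
  using irr nbr_fin by (simp add: nbr_cl_def mdeg_def nbr_def)

lemma HtH: assumes j: "j < N" and j': "j' < N"
  shows "(\<Sum>k<mtot N adj. Hmat N adj $$ (k,j) * Hmat N adj $$ (k,j'))
     = (if j = j' then real (mdeg N adj (Suc j)) else 0)"
proof (cases "j = j'")
  case False
  have "\<And>k. k < mtot N adj \<Longrightarrow> \<not> (hit k j \<and> hit k j')"
    using sidx_inj False by (auto simp: hit_def) (metis Suc_inject)
  then show ?thesis using False j j' by (auto simp: H_entry intro!: sum.neutral)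
next
  case True
  have jV: "Suc j \<in> Vset N" using j by (simp add: Vset_def)
  have seteq: "{k \<in> {..<mtot N adj}. hit k j} = (\<lambda>i. sidx N adj i (Suc j) - 1) ` {i \<in> Vset N. Suc j \<in> nbr_cl N adj i}"
  proof (rule subset_antisym; rule subsetI)
    fix k assume "k \<in> {k \<in> {..<mtot N adj}. hit k j}"
    then obtain i where "i \<in> Vset N" "Suc j \<in> nbr_cl N adj i" "Suc k = sidx N adj i (Suc j)"
      by (auto simp: hit_def)
    then show "k \<in> (\<lambda>i. sidx N adj i (Suc j) - 1) ` {i \<in> Vset N. Suc j \<in> nbr_cl N adj i}"
      by (intro image_eqI[of _ _ i]) auto
  next
    fix k assume "k \<in> (\<lambda>i. sidx N adj i (Suc j) - 1) ` {i \<in> Vset N. Suc j \<in> nbr_cl N adj i}"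
    then obtain i where i: "i \<in> Vset N" "Suc j \<in> nbr_cl N adj i" "k = sidx N adj i (Suc j) - 1"
      by auto
    with sidx_le_m[OF i(1,2)] show "k \<in> {k \<in> {..<mtot N adj}. hit k j}"
      by (auto simp: hit_def)
  qed
  have "(\<Sum>k<mtot N adj. Hmat N adj $$ (k,j) * Hmat N adj $$ (k,j'))
      = (\<Sum>k<mtot N adj. if hit k j then 1 else 0)"
    using True j by (intro sum.cong) (auto simp: H_entry)
  also have "\<dots> = real (card {k \<in> {..<mtot N adj}. hit k j})"
    by (simp add: sum.If_cases Int_def)
  also have "card {k \<in> {..<mtot N adj}. hit k j} = card {i \<in> Vset N. Suc j \<in> nbr_cl N adj i}"
    unfolding seteq
  proof (rule card_image, rule inj_onI)
    fix x y assume "x \<in> {i \<in> Vset N. Suc j \<in> nbr_cl N adj i}" "y \<in> {i \<in> Vset N. Suc j \<in> nbr_cl N adj i}"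
      "sidx N adj x (Suc j) - 1 = sidx N adj y (Suc j) - 1"
    with sidx_le_m[of x "Suc j"] sidx_le_m[of y "Suc j"] sidx_inj[of x "Suc j" y "Suc j"]
    show "x = y" by auto
  qed
  also have "\<dots> = mdeg N adj (Suc j)" using cl_set[OF jV] card_cl by simp
  finally show ?thesis using True by simp
qed


end

context gctx
begin

lemma mdeg_pos: "0 < mdeg N adj i" by (simp add: mdeg_def)

lemma dimH: "dim_row (Hmat N adj) = mtot N adj" "dim_col (Hmat N adj) = N"
  by (simp_all add: Hmat_def)

lemma Hbar_carrier: "Hbar N adj \<in> carrier_mat N (mtot N adj)"
proof -
  have a1: "mat N N (\<lambda>(i, j). if i = j then 1 / real (mdeg N adj (Suc i)) else 0) \<in> carrier_mat N N"
    by (rule mat_carrier)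
  have a2: "transpose_mat (Hmat N adj) \<in> carrier_mat N (mtot N adj)"
    using Hmat_carrier by simp
  show ?thesis unfolding Hbar_def by (rule mult_carrier_mat[OF a1 a2])
qed

lemma Hbar_entry: assumes j: "j < N" and k: "k < mtot N adj"
  shows "Hbar N adj $$ (j,k) = Hmat N adj $$ (k,j) / real (mdeg N adj (Suc j))"
proof -
  have "Hbar N adj $$ (j,k) = (\<Sum>l\<in>{0..<N}. (if j = l then 1 / real (mdeg N adj (Suc j)) else 0) * Hmat N adj $$ (k,l))"
    unfolding Hbar_def using j k by (simp add: dimH scalar_prod_def)
  also have "\<dots> = (\<Sum>l\<in>{0..<N}. if l = j then Hmat N adj $$ (k,j) / real (mdeg N adj (Suc j)) else 0)"
    by (rule sum.cong) auto
  also have "\<dots> = Hmat N adj $$ (k,j) / real (mdeg N adj (Suc j))"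
    using j by simp
  finally show ?thesis .
qed

lemma HbH: "Hbar N adj * Hmat N adj = 1\<^sub>m N"
proof (rule eq_matI)
  fix j j' assume j: "j < dim_row (1\<^sub>m N)" and j': "j' < dim_col (1\<^sub>m N)"
  then have jN: "j < N" "j' < N" by auto
  have "(Hbar N adj * Hmat N adj) $$ (j,j') = (\<Sum>k<mtot N adj. Hbar N adj $$ (j,k) * Hmat N adj $$ (k,j'))"
    using jN Hbar_carrier Hmat_carrier by (simp add: scalar_prod_def atLeast0LessThan)
  also have "\<dots> = (\<Sum>k<mtot N adj. Hmat N adj $$ (k,j) * Hmat N adj $$ (k,j')) / real (mdeg N adj (Suc j))"
    using jN by (simp add: Hbar_entry sum_divide_distrib)
  also have "\<dots> = (if j = j' then 1 else 0)"
    using HtH[OF jN] mdeg_pos[of "Suc j"] mdeg_pos[of "Suc j'"] by auto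
  finally show "(Hbar N adj * Hmat N adj) $$ (j,j') = 1\<^sub>m N $$ (j,j')" using jN by simp
qed (use Hbar_carrier Hmat_carrier in auto)

lemma P_entry: assumes k: "k < mtot N adj" and k': "k' < mtot N adj"
  shows "(Hmat N adj * Hbar N adj) $$ (k,k') = (\<Sum>j<N. Hmat N adj $$ (k,j) * (Hmat N adj $$ (k',j) / real (mdeg N adj (Suc j))))"
  using k k' Hbar_carrier Hmat_carrier by (simp add: scalar_prod_def atLeast0LessThan Hbar_entry)

lemma P_sym: "transpose_mat (Hmat N adj * Hbar N adj) = Hmat N adj * Hbar N adj"
proof (rule eq_matI)
  fix k k' assume "k < dim_row (Hmat N adj * Hbar N adj)" "k' < dim_col (Hmat N adj * Hbar N adj)"
  then have kk: "k < mtot N adj" "k' < mtot N adj" using Hbar_carrier Hmat_carrier by auto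
  show "transpose_mat (Hmat N adj * Hbar N adj) $$ (k,k') = (Hmat N adj * Hbar N adj) $$ (k,k')"
  proof -
    have "transpose_mat (Hmat N adj * Hbar N adj) $$ (k,k') = (Hmat N adj * Hbar N adj) $$ (k',k)"
      using kk Hbar_carrier Hmat_carrier by simp
    also have "\<dots> = (Hmat N adj * Hbar N adj) $$ (k,k')"
      unfolding P_entry[OF kk(2,1)] P_entry[OF kk] by (rule sum.cong) auto
    finally show ?thesis .
  qed
qed (use Hbar_carrier Hmat_carrier in auto)

lemma P_idem: "(Hmat N adj * Hbar N adj) * (Hmat N adj * Hbar N adj) = Hmat N adj * Hbar N adj"
proof -
  have H: "Hmat N adj \<in> carrier_mat (mtot N adj) N" and Hb: "Hbar N adj \<in> carrier_mat N (mtot N adj)"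
    using Hbar_carrier Hmat_carrier by auto
  have "(Hmat N adj * Hbar N adj) * (Hmat N adj * Hbar N adj) = Hmat N adj * (Hbar N adj * (Hmat N adj * Hbar N adj))"
    using assoc_mult_mat[OF H Hb mult_carrier_mat[OF H Hb]] .
  also have "Hbar N adj * (Hmat N adj * Hbar N adj) = (Hbar N adj * Hmat N adj) * Hbar N adj"
    using assoc_mult_mat[OF Hb H Hb] by simp
  also have "(Hbar N adj * Hmat N adj) * Hbar N adj = Hbar N adj"
    unfolding HbH using left_mult_one_mat[OF Hb] .
  finally show ?thesis .
qed

lemma R_carrier: "Rmat N adj \<in> carrier_mat (mtot N adj) (mtot N adj)"
  using Hbar_carrier Hmat_carrier unfolding Rmat_def by (intro minus_carrier_mat mult_carrier_mat) auto

lemma R_sym: "transpose_mat (Rmat N adj) = Rmat N adj"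
  using Hbar_carrier Hmat_carrier unfolding Rmat_def
  by (subst transpose_minus[of _ "mtot N adj" "mtot N adj"]) (auto simp: P_sym)

lemma R_idem: "Rmat N adj * Rmat N adj = Rmat N adj"
proof -
  define P where "P = Hmat N adj * Hbar N adj"
  define m where "m = mtot N adj"
  have P: "P \<in> carrier_mat m m" using Hbar_carrier Hmat_carrier by (simp add: P_def m_def)
  have PP: "P * P = P" using P_idem by (simp add: P_def)
  have R: "Rmat N adj = 1\<^sub>m m - P" by (simp add: Rmat_def P_def m_def)
  have "(1\<^sub>m m - P) * (1\<^sub>m m - P) = 1\<^sub>m m * (1\<^sub>m m - P) - P * (1\<^sub>m m - P)"
    using P by (intro minus_mult_distrib_mat) auto
  also have "P * (1\<^sub>m m - P) = P * 1\<^sub>m m - P * P"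
    using P by (intro mult_minus_distrib_mat) auto
  also have "1\<^sub>m m * (1\<^sub>m m - P) - (P * 1\<^sub>m m - P * P) = 1\<^sub>m m - P"
    using P unfolding PP by (intro eq_matI) auto
  finally show ?thesis using R by simp
qed


lemma kernel_vec: assumes ab: "adj a b"
  shows "\<exists>v. v \<in> carrier_vec (mtot N adj) \<and> v \<noteq> 0\<^sub>v (mtot N adj) \<and> Hbar N adj *\<^sub>v v = 0\<^sub>v N"
proof -
  have aV: "a \<in> Vset N" and bV: "b \<in> Vset N" using inV[OF ab] by auto
  have anb: "a \<noteq> b" using ab irr by auto
  have hb1: "b \<in> nbr_cl N adj a" using ab bV by (simp add: nbr_cl_def nbr_def)
  have hb2: "b \<in> nbr_cl N adj b" by (simp add: nbr_cl_def)
  define p where "p = sidx N adj a b - 1"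
  define q where "q = sidx N adj b b - 1"
  have p1: "Suc p = sidx N adj a b" using sidx_le_m(1)[OF aV hb1] by (simp add: p_def)
  have q1: "Suc q = sidx N adj b b" using sidx_le_m(1)[OF bV hb2] by (simp add: q_def)
  have pm: "p < mtot N adj" using sidx_le_m(2)[OF aV hb1] p1 by linarith
  have qm: "q < mtot N adj" using sidx_le_m(2)[OF bV hb2] q1 by linarith
  have pq: "p \<noteq> q"
  proof
    assume "p = q"
    then have "sidx N adj a b = sidx N adj b b" using p1 q1 by simp
    then show False using sidx_inj[OF aV hb1 bV hb2] anb by simp
  qed
  have hp: "hit p j \<longleftrightarrow> Suc j = b" for j
  proof
    assume "hit p j"
    then obtain i where "i \<in> Vset N" "Suc j \<in> nbr_cl N adj i" "Suc p = sidx N adj i (Suc j)"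
      by (auto simp: hit_def)
    then show "Suc j = b" using sidx_inj[OF aV hb1] p1 by metis
  next
    assume "Suc j = b"
    then show "hit p j" using aV hb1 p1 by (auto simp: hit_def)
  qed
  have hq: "hit q j \<longleftrightarrow> Suc j = b" for j
  proof
    assume "hit q j"
    then obtain i where "i \<in> Vset N" "Suc j \<in> nbr_cl N adj i" "Suc q = sidx N adj i (Suc j)"
      by (auto simp: hit_def)
    then show "Suc j = b" using sidx_inj[OF bV hb2] q1 by metis
  next
    assume "Suc j = b"
    then show "hit q j" using bV hb2 q1 by (auto simp: hit_def)
  qed
  define v where "v = vec (mtot N adj) (\<lambda>k. (if k = p then 1 else 0) - (if k = q then 1 else (0::real)))"
  have vc: "v \<in> carrier_vec (mtot N adj)" by (simp add: v_def)
  have vp: "v $ p = 1" using pm pq by (simp add: v_def)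
  have v0: "v \<noteq> 0\<^sub>v (mtot N adj)"
  proof
    assume "v = 0\<^sub>v (mtot N adj)"
    then have "v $ p = 0" using pm by simp
    then show False using vp by simp
  qed
  have Hv: "Hbar N adj *\<^sub>v v = 0\<^sub>v N"
  proof (rule eq_vecI)
    fix j assume "j < dim_vec (0\<^sub>v N :: real vec)"
    then have j: "j < N" by simp
    have "(Hbar N adj *\<^sub>v v) $ j = (\<Sum>k\<in>{0..<mtot N adj}. Hbar N adj $$ (j,k) * v $ k)"
      using j Hbar_carrier vc by (simp add: scalar_prod_def)
    also have "\<dots> = (\<Sum>k\<in>{0..<mtot N adj}. (if k = p then Hbar N adj $$ (j,p) else 0) - (if k = q then Hbar N adj $$ (j,q) else 0))"
      by (rule sum.cong) (auto simp: v_def)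
    also have "\<dots> = Hbar N adj $$ (j,p) - Hbar N adj $$ (j,q)"
      using pm qm by (simp add: sum_subtractf)
    also have "\<dots> = 0"
      using j pm qm by (simp add: Hbar_entry H_entry hp hq)
    finally show "(Hbar N adj *\<^sub>v v) $ j = 0\<^sub>v N $ j" using j by simp
  qed (use Hbar_carrier in auto)
  show ?thesis using vc v0 Hv by blast
qed

lemma eig_R: assumes "eigenvalue (Rmat N adj) l" shows "l = 0 \<or> l = 1"
proof -
  let ?R = "Rmat N adj" and ?m = "mtot N adj"
  have R: "?R \<in> carrier_mat ?m ?m" by (rule R_carrier)
  obtain w where w: "w \<in> carrier_vec ?m" "w \<noteq> 0\<^sub>v ?m" "?R *\<^sub>v w = l \<cdot>\<^sub>v w"
    using assms R unfolding eigenvalue_def eigenvector_def by auto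
  have "?R *\<^sub>v (?R *\<^sub>v w) = (?R * ?R) *\<^sub>v w" using R w(1) by simp
  also have "\<dots> = l \<cdot>\<^sub>v w" using R_idem w(3) by simp
  finally have e1: "?R *\<^sub>v (?R *\<^sub>v w) = l \<cdot>\<^sub>v w" .
  have "?R *\<^sub>v (?R *\<^sub>v w) = l \<cdot>\<^sub>v (l \<cdot>\<^sub>v w)"
    unfolding w(3) using mult_mat_vec[OF R w(1)] w(3) by simp
  with e1 have e2: "l \<cdot>\<^sub>v (l \<cdot>\<^sub>v w) = l \<cdot>\<^sub>v w" by simp
  obtain i where i: "i < ?m" "w $ i \<noteq> 0"
  proof -
    have "\<not> (\<forall>i < ?m. w $ i = 0)"
    proof
      assume "\<forall>i < ?m. w $ i = 0"
      then have "w = 0\<^sub>v ?m" using w(1) by (intro eq_vecI) auto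
      then show False using w(2) by simp
    qed
    then show ?thesis using that by auto
  qed
  have "(l \<cdot>\<^sub>v (l \<cdot>\<^sub>v w)) $ i = (l \<cdot>\<^sub>v w) $ i" using e2 by simp
  then have "l * (l * w $ i) = l * w $ i" using i w(1) by simp
  then have "(l * l - l) * w $ i = 0" by (simp add: algebra_simps)
  then have "l * l - l = 0" using i(2) by simp
  then have "l * (l - 1) = 0" by (simp add: algebra_simps)
  then show ?thesis by auto
qed

lemma eig_R1: assumes ab: "adj a b" shows "eigenvalue (Rmat N adj) 1"
proof -
  obtain v where v: "v \<in> carrier_vec (mtot N adj)" "v \<noteq> 0\<^sub>v (mtot N adj)" "Hbar N adj *\<^sub>v v = 0\<^sub>v N"
    using kernel_vec[OF ab] by blast
  have H: "Hmat N adj \<in> carrier_mat (mtot N adj) N" by (rule Hmat_carrier)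
  have Hb: "Hbar N adj \<in> carrier_mat N (mtot N adj)" by (rule Hbar_carrier)
  have "(Hmat N adj * Hbar N adj) *\<^sub>v v = Hmat N adj *\<^sub>v (Hbar N adj *\<^sub>v v)"
    using H Hb v(1) by simp
  also have "\<dots> = 0\<^sub>v (mtot N adj)"
    unfolding v(3) using H by (intro eq_vecI) (auto simp: scalar_prod_def)
  finally have Pv: "(Hmat N adj * Hbar N adj) *\<^sub>v v = 0\<^sub>v (mtot N adj)" .
  have "Rmat N adj *\<^sub>v v = 1\<^sub>m (mtot N adj) *\<^sub>v v - (Hmat N adj * Hbar N adj) *\<^sub>v v"
    unfolding Rmat_def using H Hb v(1) by (intro minus_mult_distrib_mat_vec) auto
  also have "\<dots> = v" using Pv v(1) by simp
  finally have "Rmat N adj *\<^sub>v v = 1 \<cdot>\<^sub>v v" by simp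
  then show ?thesis using v R_carrier unfolding eigenvalue_def eigenvector_def by auto
qed

lemma main:
  assumes N2: "N \<ge> 2" and conn: "\<And>i j. i \<in> Vset N \<Longrightarrow> j \<in> Vset N \<Longrightarrow> adj\<^sup>*\<^sup>* i j"
  shows "induced_norm (Rmat N adj) = 1"
proof -
  have "adj\<^sup>*\<^sup>* 1 2" using conn N2 by (simp add: Vset_def)
  then obtain b where ab: "adj 1 b"
    by (rule converse_rtranclpE) auto
  have A: "transpose_mat (Rmat N adj) * Rmat N adj = Rmat N adj"
    using R_sym R_idem by simp
  have S: "{l. eigenvalue (Rmat N adj) l} \<subseteq> {0, 1}" using eig_R by auto
  have "lambda_max (transpose_mat (Rmat N adj) * Rmat N adj) = 1"
    unfolding A lambda_max_def
  proof (rule Max_eqI)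
    show "finite {l. eigenvalue (Rmat N adj) l}" using S finite_subset by blast
    show "\<And>y. y \<in> {l. eigenvalue (Rmat N adj) l} \<Longrightarrow> y \<le> 1" using S by auto
    show "1 \<in> {l. eigenvalue (Rmat N adj) l}" using eig_R1[OF ab] by simp
  qed
  then show ?thesis by (simp add: induced_norm_def)
qed
end

theorem lemma5:
  fixes N :: nat and adj :: "nat \<Rightarrow> nat \<Rightarrow> bool"
  assumes "N \<ge> 2"
    and "\<And>i j. adj i j \<Longrightarrow> i \<in> Vset N \<and> j \<in> Vset N"
    and "\<And>i j. adj i j \<Longrightarrow> adj j i"
    and "\<And>i. \<not> adj i i"
    and "\<And>i j. i \<in> Vset N \<Longrightarrow> j \<in> Vset N \<Longrightarrow> adj\<^sup>*\<^sup>* i j"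
    and "\<exists>i \<in> Vset N. \<exists>j \<in> Vset N. i \<noteq> j \<and> \<not> adj i j"
  shows "induced_norm (Rmat N adj) = 1"
proof -
  interpret gctx N adj
    by (intro gctx.intro) (use assms in blast)+
  show ?thesis using main[OF assms(1) assms(5)] .
qed

end
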